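(* Let $f:[0,1]\times\mathbb{R}\to\mathbb{R}$ satisfy: (C(c)) $f$ is continuous on $[0,1]\times\mathbb{R}$ and has a continuous partial derivative $f_x$ with respect to the second variable; (D(f)) there exist positive constants $A,B$ with $A<1$ such that $|f(t,x)|\leqslant A|x|+B$ for all $t\in[0,1]$, $x\in\mathbb{R}$; (D($f_x$)) $\inf_{[0,1]\times\mathbb{R}} f_x>-1$; and let (D(v)) $v:[0,1]\to\mathbb{R}$ be continuous. Let $x^\star$ be the unique solution in $H^2(0,1)\cap H^1_0(0,1)$ of $\ddot{x}(t)=f(t,x(t))+v(t)$, $x(0)=x(1)=0$, and for each $N\in\mathbb{N}$, $N\geqslant2$, let $x_N:\{0,\dots,N\}\to\mathbb{R}$ be the unique solution of $$\Delta^2x(k-1)=\tfrac{1}{N^2}f\left(\tfrac{k}{N},x(k)\right)+\tfrac{1}{N^2}v\left(\tfrac{k}{N}\right),\ k=1,\dots,N-1,\qquad x(0)=x(N)=0.$$ Then $\lim_{N\to\infty}\max_{k\in\{0,\dots,N\}}\left|x^\star\left(\tfrac{k}{N}\right)-x_N(k)\right|=0$.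
   Context: $\Delta x(k-1)=x(k)-x(k-1)$, $\Delta^2x(k-1)=x(k+1)-2x(k)+x(k-1)$. $H^1_0(0,1)$: absolutely continuous functions on $[0,1]$ vanishing at $0$ and $1$ with derivative in $L^2$; $H^2(0,1)$: functions in $H^1(0,1)$ whose derivative is in $H^1(0,1)$. *)

theory Defs
  imports "HOL-Analysis.Analysis"
begin

text \<open>g is an L^2(0,1) weak derivative of x on [0,1]: x is absolutely continuous on [0,1]
  with x(t) = x(0) + int_0^t g, and g is square integrable on [0,1].\<close>
definition has_L2_weak_deriv :: "(real \<Rightarrow> real) \<Rightarrow> (real \<Rightarrow> real) \<Rightarrow> bool" where
  "has_L2_weak_deriv x g \<longleftrightarrow>
     integrable (lebesgue_on {0..1}) g \<and>
     integrable (lebesgue_on {0..1}) (\<lambda>t. (g t)\<^sup>2) \<and>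
     (\<forall>t\<in>{0..1}. x t = x 0 + (LINT s|lebesgue_on {0..t}. g s))"

definition H1 :: "(real \<Rightarrow> real) \<Rightarrow> bool" where
  "H1 x \<longleftrightarrow> (\<exists>g. has_L2_weak_deriv x g)"

definition H1_0 :: "(real \<Rightarrow> real) \<Rightarrow> bool" where
  "H1_0 x \<longleftrightarrow> H1 x \<and> x 0 = 0 \<and> x 1 = 0"

definition is_H2_solution :: "(real \<Rightarrow> real \<Rightarrow> real) \<Rightarrow> (real \<Rightarrow> real) \<Rightarrow> (real \<Rightarrow> real) \<Rightarrow> bool" where
  "is_H2_solution f v x \<longleftrightarrow> H1_0 x \<and>
     (\<exists>y g. has_L2_weak_deriv x y \<and> has_L2_weak_deriv y g \<and>
        (AE t in lebesgue_on {0..1}. g t = f t (x t) + v t))"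

end

theory Submission
  imports Defs
begin

lemma weak_to_HK:
  assumes "has_L2_weak_deriv x y"
  shows "y integrable_on {0..1}" "\<forall>t\<in>{0..1}. x t = x 0 + integral {0..t} y"
proof -
  have i: "integrable (lebesgue_on {0..1}) y" and e: "\<forall>t\<in>{0..1}. x t = x 0 + (LINT s|lebesgue_on {0..t}. y s)"
    using assms unfolding has_L2_weak_deriv_def by blast+
  show "y integrable_on {0..1}" by (rule integrable_on_lebesgue_on[OF i]) simp
  show "\<forall>t\<in>{0..1}. x t = x 0 + integral {0..t} y"
  proof
    fix t :: real assume t: "t \<in> {0..1}"
    have "integrable (lebesgue_on {0..t}) y" by (rule integrable_subinterval[OF i]) (use t in auto)
    then have "(LINT s|lebesgue_on {0..t}. y s) = integral {0..t} y"
      by (rule lebesgue_integral_eq_integral) simp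
    moreover have "x t = x 0 + (LINT s|lebesgue_on {0..t}. y s)" using e t by blast
    ultimately show "x t = x 0 + integral {0..t} y" by simp
  qed
qed

lemma cont_from_int:
  fixes x y :: "real \<Rightarrow> real"
  assumes "y integrable_on {0..1}" "\<forall>t\<in>{0..1}. x t = x 0 + integral {0..t} y"
  shows "continuous_on {0..1} x"
proof -
  have "continuous_on {0..1} (\<lambda>t. x 0 + integral {0..t} y)"
    using indefinite_integral_continuous_1[OF assms(1)] by (intro continuous_intros)
  then show ?thesis by (rule continuous_on_eq) (use assms(2) in metis)
qed

lemma deriv_from_int:
  fixes x y :: "real \<Rightarrow> real"
  assumes "continuous_on {0..1} y" "\<forall>t\<in>{0..1}. x t = x 0 + integral {0..t} y"
    and t: "0 < t" "t < 1"
  shows "(x has_real_derivative y t) (at t)"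
proof -
  have "((\<lambda>u. x 0 + integral {0..u} y) has_real_derivative y t) (at t within {0..1})"
    using integral_has_real_derivative[OF assms(1), of t] t
    by (auto intro!: derivative_eq_intros)
  then have d: "((\<lambda>u. x 0 + integral {0..u} y) has_real_derivative y t) (at t)"
    using at_within_Icc_at[of 0 t 1] t by simp
  show ?thesis
  proof (rule has_field_derivative_transform_within_open[OF d, of "{0<..<1}"])
    show "open {0<..<1::real}" by simp
    show "t \<in> {0<..<1}" using t by simp
    fix u :: real assume "u \<in> {0<..<1}"
    then show "x 0 + integral {0..u} y = x u" using assms(2) by (metis greaterThanLessThan_iff atLeastAtMost_iff less_imp_le)
  qed
qed

lemma regularity:
  fixes f :: "real \<Rightarrow> real \<Rightarrow> real"
  assumes xy: "has_L2_weak_deriv x y" and yg: "has_L2_weak_deriv y g"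
    and ae: "AE t in lebesgue_on {0..1}. g t = f t (x t) + v t"
    and Cf: "continuous_on ({0..1} \<times> UNIV) (\<lambda>(t, x). f t x)"
    and Dv: "continuous_on {0..1} v"
  shows "continuous_on {0..1} x" "continuous_on {0..1} y" "continuous_on {0..1} (\<lambda>t. f t (x t) + v t)"
    "\<forall>t. 0 < t \<and> t < 1 \<longrightarrow> (x has_real_derivative y t) (at t) \<and> (y has_real_derivative f t (x t) + v t) (at t)"
proof -
  note X = weak_to_HK[OF xy] and Y = weak_to_HK[OF yg]
  show cx: "continuous_on {0..1} x" using cont_from_int[OF X] .
  show cy: "continuous_on {0..1} y" using cont_from_int[OF Y] .
  have "continuous_on {0..1} (\<lambda>t. f t (x t))"
  proof -
    have "continuous_on {0..1} (\<lambda>t. (t, x t))" using cx by (intro continuous_intros)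
    moreover have "(\<lambda>t. (t, x t)) ` {0..1} \<subseteq> {0..1} \<times> UNIV" by auto
    ultimately have "continuous_on {0..1} ((\<lambda>(t, x). f t x) \<circ> (\<lambda>t. (t, x t)))"
      using continuous_on_compose continuous_on_subset[OF Cf] by blast
    then show ?thesis by (simp add: o_def)
  qed
  then show ch: "continuous_on {0..1} (\<lambda>t. f t (x t) + v t)" using Dv by (intro continuous_intros)
  define h where "h = (\<lambda>t. f t (x t) + v t)"
  have ae2: "AE t in lebesgue. t \<in> {0..1} \<longrightarrow> g t = h t"
    using ae unfolding h_def by (subst (asm) AE_restrict_space_iff) auto
  then obtain N where N: "\<And>t. t \<in> space lebesgue - N \<Longrightarrow> t \<in> {0..1} \<longrightarrow> g t = h t" "N \<in> null_sets lebesgue"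
    by (rule AE_E3) blast
  have negN: "negligible N" using N(2) negligible_iff_null_sets by blast
  have Y2: "\<forall>t\<in>{0..1}. y t = y 0 + integral {0..t} h"
  proof
    fix t :: real assume t: "t \<in> {0..1}"
    have "integral {0..t} g = integral {0..t} h"
      by (rule integral_spike[OF negN]) (use N(1) t in auto)
    moreover have "y t = y 0 + integral {0..t} g" using Y(2) t by blast
    ultimately show "y t = y 0 + integral {0..t} h" by simp
  qed
  show "\<forall>t. 0 < t \<and> t < 1 \<longrightarrow> (x has_real_derivative y t) (at t) \<and> (y has_real_derivative f t (x t) + v t) (at t)"
  proof (intro allI impI conjI)
    fix t :: real assume t: "0 < t \<and> t < 1"
    show "(x has_real_derivative y t) (at t)" using deriv_from_int[OF cy X(2)] t by blast
    show "(y has_real_derivative f t (x t) + v t) (at t)" using deriv_from_int[OF ch[folded h_def] Y2] t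
      unfolding h_def by blast
  qed
qed


lemma mvt_bound:
  fixes F F' :: "real \<Rightarrow> real"
  assumes ab: "a < b" and c: "continuous_on {a..b} F"
    and d: "\<And>u. a < u \<Longrightarrow> u < b \<Longrightarrow> (F has_real_derivative F' u) (at u)"
    and B: "\<And>u. a < u \<Longrightarrow> u < b \<Longrightarrow> \<bar>F' u\<bar> \<le> B"
  shows "\<bar>F b - F a\<bar> \<le> B * (b - a)"
proof -
  obtain l z where z: "a < z" "z < b" "DERIV F z :> l" "F b - F a = (b - a) * l"
    using MVT[OF ab c] d real_differentiable_def by meson
  have "l = F' z" using DERIV_unique[OF z(3) d[OF z(1,2)]] .
  then have "\<bar>l\<bar> \<le> B" using B z by simp
  then show ?thesis using z(4) ab by (simp add: abs_mult mult.commute mult_right_mono)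
qed

lemma comp_shift_cont:
  fixes y :: "real \<Rightarrow> real"
  assumes "continuous_on {0..1} y" "0 \<le> t - d" "t + d \<le> 1" "0 \<le> s" "s \<le> d"
  shows "continuous_on {0..s} (\<lambda>u. y (t + u))" "continuous_on {0..s} (\<lambda>u. y (t - u))"
proof -
  show "continuous_on {0..s} (\<lambda>u. y (t + u))"
    by (rule continuous_on_compose2[OF assms(1)]) (use assms in \<open>auto intro!: continuous_intros\<close>)
  show "continuous_on {0..s} (\<lambda>u. y (t - u))"
    by (rule continuous_on_compose2[OF assms(1)]) (use assms in \<open>auto intro!: continuous_intros\<close>)
qed

lemma second_diff:
  fixes x y h :: "real \<Rightarrow> real"
  assumes cx: "continuous_on {0..1} x" and cy: "continuous_on {0..1} y"
    and dx: "\<forall>t. 0 < t \<and> t < 1 \<longrightarrow> (x has_real_derivative y t) (at t) \<and> (y has_real_derivative h t) (at t)"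
    and t: "0 \<le> t - d" "t + d \<le> 1" "0 < d"
    and md: "\<forall>u. t - d < u \<and> u < t + d \<longrightarrow> \<bar>h u - h t\<bar> \<le> e"
  shows "\<bar>x (t + d) - 2 * x t + x (t - d) - d\<^sup>2 * h t\<bar> \<le> 2 * e * d\<^sup>2"
proof -
  define r where "r = (\<lambda>u. y (t + u) - y (t - u) - 2 * u * h t)"
  have rb: "\<bar>r s\<bar> \<le> 2 * e * s" if s: "0 < s" "s \<le> d" for s
  proof -
    have "\<bar>r s - r 0\<bar> \<le> (2 * e) * (s - 0)"
    proof (rule mvt_bound[where F' = "\<lambda>u. h (t + u) + h (t - u) - 2 * h t"])
      show "0 < s" using s by simp
      show "continuous_on {0..s} r" unfolding r_def
        using comp_shift_cont[OF cy t(1,2), of s] s by (intro continuous_intros) auto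
      fix u assume u: "0 < u" "u < s"
      have a1: "(y has_real_derivative h (t + u)) (at (t + u))" using dx u s t by auto
      have a2: "(y has_real_derivative h (t - u)) (at (t - u))" using dx u s t by auto
      have "((\<lambda>u. y (t + u)) has_real_derivative h (t + u) * 1) (at u)"
        by (rule DERIV_chain2[where g="\<lambda>u. t + u", OF a1]) (auto intro!: derivative_eq_intros)
      moreover have "((\<lambda>u. y (t - u)) has_real_derivative h (t - u) * (-1)) (at u)"
        by (rule DERIV_chain2[where g="\<lambda>u. t - u", OF a2]) (auto intro!: derivative_eq_intros)
      ultimately show "(r has_real_derivative h (t + u) + h (t - u) - 2 * h t) (at u)"
        unfolding r_def by (auto intro!: derivative_eq_intros)
      have "\<bar>h (t + u) - h t\<bar> \<le> e" "\<bar>h (t - u) - h t\<bar> \<le> e" using md u s by auto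
      then show "\<bar>h (t + u) + h (t - u) - 2 * h t\<bar> \<le> 2 * e" by linarith
    qed
    then show ?thesis unfolding r_def by simp
  qed
  define q where "q = (\<lambda>u. x (t + u) + x (t - u) - 2 * x t - u\<^sup>2 * h t)"
  have "\<bar>q d - q 0\<bar> \<le> (2 * e * d) * (d - 0)"
  proof (rule mvt_bound[where F' = r])
    show "0 < d" using t by simp
    show "continuous_on {0..d} q" unfolding q_def
      using comp_shift_cont[OF cx t(1,2), of d] t by (intro continuous_intros) auto
    fix u assume u: "0 < u" "u < d"
    have a1: "(x has_real_derivative y (t + u)) (at (t + u))" using dx u t by auto
    have a2: "(x has_real_derivative y (t - u)) (at (t - u))" using dx u t by auto
    have "((\<lambda>u. x (t + u)) has_real_derivative y (t + u) * 1) (at u)"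
      by (rule DERIV_chain2[where g="\<lambda>u. t + u", OF a1]) (auto intro!: derivative_eq_intros)
    moreover have "((\<lambda>u. x (t - u)) has_real_derivative y (t - u) * (-1)) (at u)"
      by (rule DERIV_chain2[where g="\<lambda>u. t - u", OF a2]) (auto intro!: derivative_eq_intros)
    ultimately show "(q has_real_derivative r u) (at u)"
      unfolding q_def r_def by (auto intro!: derivative_eq_intros)
    have "\<bar>r u\<bar> \<le> 2 * e * u" using rb u by simp
    also have "\<dots> \<le> 2 * e * d"
    proof -
      have "0 \<le> e" using md[rule_format, of t] t by auto
      then show ?thesis using u by (simp add: mult_left_mono)
    qed
    finally show "\<bar>r u\<bar> \<le> 2 * e * d" .
  qed
  then show ?thesis unfolding q_def by (simp add: power2_eq_square algebra_simps)
qed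


lemma sbp:
  fixes e :: "nat \<Rightarrow> real"
  shows "(\<Sum>k=1..n. e k * (e (k+1) - 2 * e k + e (k-1))) =
     e n * (e (Suc n) - e n) - e 0 * (e 1 - e 0) - (\<Sum>j<n. (e (Suc j) - e j)\<^sup>2)"
proof (induction n)
  case 0
  then show ?case by simp
next
  case (Suc n)
  have "(\<Sum>k=1..Suc n. e k * (e (k+1) - 2 * e k + e (k-1))) =
      (\<Sum>k=1..n. e k * (e (k+1) - 2 * e k + e (k-1))) + e (Suc n) * (e (Suc n + 1) - 2 * e (Suc n) + e n)"
    by simp
  also have "\<dots> = e (Suc n) * (e (Suc (Suc n)) - e (Suc n)) - e 0 * (e 1 - e 0) - (\<Sum>j<Suc n. (e (Suc j) - e j)\<^sup>2)"
    using Suc by (simp add: power2_eq_square algebra_simps)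
  finally show ?case .
qed

lemma cs_sum:
  fixes d :: "nat \<Rightarrow> real"
  shows "(\<Sum>j<k. d j)\<^sup>2 \<le> real k * (\<Sum>j<k. (d j)\<^sup>2)"
  using Cauchy_Schwarz_ineq_sum[of "\<lambda>_. 1" d "{..<k}"] by simp

lemma disc:
  fixes e D r :: "nat \<Rightarrow> real"
  assumes N: "N \<ge> 1" and e0: "e 0 = 0" and eN: "e N = 0" and a: "0 \<le> a" "a < 1" and E: "0 \<le> E"
    and eq: "\<forall>k\<in>{1..N-1}. e (k+1) - 2 * e k + e (k-1) = D k / (real N)\<^sup>2 + r k"
    and Dk: "\<forall>k\<in>{1..N-1}. e k * D k \<ge> - a * (e k)\<^sup>2"
    and rr: "\<forall>k\<in>{1..N-1}. \<bar>r k\<bar> \<le> E / (real N)\<^sup>2"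
  shows "\<forall>k\<le>N. \<bar>e k\<bar> \<le> E / (1 - a)"
proof -
  define M where "M = Max ((\<lambda>k. \<bar>e k\<bar>) ` {..N})"
  have hM: "\<bar>e k\<bar> \<le> M" if "k \<le> N" for k unfolding M_def using that by (intro Max_ge) auto
  obtain k0 where k0: "k0 \<le> N" "\<bar>e k0\<bar> = M"
  proof -
    have "M \<in> (\<lambda>k. \<bar>e k\<bar>) ` {..N}" unfolding M_def by (intro Max_in) auto
    then show ?thesis using that by auto
  qed
  have M0: "0 \<le> M" using k0 by auto
  define S where "S = (\<Sum>j<N. (e (Suc j) - e j)\<^sup>2)"
  have S0: "0 \<le> S" unfolding S_def by (intro sum_nonneg) auto
  have NN: "Suc (N - 1) = N" using N by simp
  have idt: "(\<Sum>k=1..N-1. e k * (e (k+1) - 2 * e k + e (k-1))) = - S"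
  proof -
    have "(\<Sum>k=1..N-1. e k * (e (k+1) - 2 * e k + e (k-1))) =
       e (N-1) * (e N - e (N-1)) - (\<Sum>j<N-1. (e (Suc j) - e j)\<^sup>2)"
      using sbp[of e "N-1"] e0 NN by simp
    also have "\<dots> = - S" unfolding S_def
      using sum.lessThan_Suc[of "\<lambda>j. (e (Suc j) - e j)\<^sup>2" "N-1"] NN eN
      by (simp add: power2_eq_square)
    finally show ?thesis .
  qed
  have sum1: "(\<Sum>k=1..N-1. e k * D k) \<ge> - (real N * (a * M\<^sup>2))"
  proof -
    have "(\<Sum>k=1..N-1. e k * D k) \<ge> (\<Sum>k=1..N-1. - a * (e k)\<^sup>2)"
      using Dk by (intro sum_mono) auto
    moreover have "(\<Sum>k=1..N-1. a * (e k)\<^sup>2) \<le> real (card {1..N-1}) * (a * M\<^sup>2)"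
    proof (rule sum_bounded_above)
      fix k assume "k \<in> {1..N-1}"
      then have "\<bar>e k\<bar> \<le> M" using hM by auto
      then have "(e k)\<^sup>2 \<le> M\<^sup>2" by (metis abs_le_square_iff abs_of_nonneg M0)
      then show "a * (e k)\<^sup>2 \<le> a * M\<^sup>2" using a by (simp add: mult_left_mono)
    qed
    moreover have "real (card {1..N-1}) * (a * M\<^sup>2) \<le> real N * (a * M\<^sup>2)"
      using a M0 by (intro mult_right_mono) auto
    ultimately show ?thesis by (simp add: sum_negf)
  qed
  have sum2: "(\<Sum>k=1..N-1. e k * r k) \<ge> - (real N * (M * (E / (real N)\<^sup>2)))"
  proof -
    have "(\<Sum>k=1..N-1. - (e k * r k)) \<le> real (card {1..N-1}) * (M * (E / (real N)\<^sup>2))"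
    proof (rule sum_bounded_above)
      fix k assume k: "k \<in> {1..N-1}"
      then have "\<bar>e k\<bar> \<le> M" using hM by auto
      moreover have "\<bar>r k\<bar> \<le> E / (real N)\<^sup>2" using rr k by auto
      ultimately have "\<bar>e k\<bar> * \<bar>r k\<bar> \<le> M * (E / (real N)\<^sup>2)" using M0 by (intro mult_mono) auto
      then show "- (e k * r k) \<le> M * (E / (real N)\<^sup>2)" by (simp add: abs_mult) (metis abs_ge_minus_self abs_mult order_trans)
    qed
    moreover have "real (card {1..N-1}) * (M * (E / (real N)\<^sup>2)) \<le> real N * (M * (E / (real N)\<^sup>2))"
      using M0 E by (intro mult_right_mono) auto
    ultimately show ?thesis by (simp add: sum_negf)
  qed
  have "- S = (\<Sum>k=1..N-1. e k * (D k / (real N)\<^sup>2 + r k))"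
    using idt[symmetric] eq by (metis (no_types, lifting) sum.cong)
  also have "\<dots> = (\<Sum>k=1..N-1. e k * D k) / (real N)\<^sup>2 + (\<Sum>k=1..N-1. e k * r k)"
    by (simp add: sum_divide_distrib sum.distrib algebra_simps)
  finally have Seq: "- S = (\<Sum>k=1..N-1. e k * D k) / (real N)\<^sup>2 + (\<Sum>k=1..N-1. e k * r k)" .
  have Npos: "0 < real N" using N by simp
  have "(\<Sum>k=1..N-1. e k * D k) / (real N)\<^sup>2 \<ge> - (real N * (a * M\<^sup>2)) / (real N)\<^sup>2"
    by (rule divide_right_mono[OF sum1]) simp
  then have "S \<le> real N * (a * M\<^sup>2) / (real N)\<^sup>2 + real N * (M * (E / (real N)\<^sup>2))"
    using Seq sum2 by linarith
  then have Sle: "real N * S \<le> a * M\<^sup>2 + M * E"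
    using Npos by (simp add: field_simps power2_eq_square)
  have "M\<^sup>2 \<le> real N * S"
  proof -
    have "e k0 = (\<Sum>j<k0. e (Suc j) - e j)" using sum_lessThan_telescope[of e k0] e0 by simp
    then have "M\<^sup>2 = (\<Sum>j<k0. e (Suc j) - e j)\<^sup>2" using k0 by (metis power2_abs)
    also have "\<dots> \<le> real k0 * (\<Sum>j<k0. (e (Suc j) - e j)\<^sup>2)" by (rule cs_sum)
    also have "\<dots> \<le> real N * S" unfolding S_def
    proof (rule mult_mono)
      show "real k0 \<le> real N" using k0 by simp
      show "(\<Sum>j<k0. (e (Suc j) - e j)\<^sup>2) \<le> (\<Sum>j<N. (e (Suc j) - e j)\<^sup>2)"
        by (rule sum_mono2) (use k0 in auto)
    qed (auto intro: sum_nonneg)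
    finally show ?thesis .
  qed
  with Sle have "(1 - a) * M\<^sup>2 \<le> M * E" by (simp add: algebra_simps)
  then have "M \<le> E / (1 - a)"
  proof (cases "M = 0")
    case True then show ?thesis using a E by simp
  next
    case False
    then have "0 < M" using M0 by simp
    then have "(1 - a) * M \<le> E" using \<open>(1 - a) * M\<^sup>2 \<le> M * E\<close>
      by (simp add: power2_eq_square mult.commute mult.left_commute) 
    then show ?thesis using a by (simp add: field_simps)
  qed
  then show ?thesis using hM by (meson order_trans)
qed


lemma mono_f:
  fixes F F' :: "real \<Rightarrow> real"
  assumes d: "\<forall>x. (F has_real_derivative F' x) (at x)" and c: "\<forall>x. F' x \<ge> c"
  shows "(p - q) * (F p - F q) \<ge> c * (p - q)\<^sup>2"
proof -
  have key: "F v - F u \<ge> c * (v - u)" if "u \<le> v" for u v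
  proof -
    have "(\<lambda>x. F x - c * x) u \<le> (\<lambda>x. F x - c * x) v"
    proof (rule DERIV_nonneg_imp_nondecreasing[OF that])
      fix x show "\<exists>y. ((\<lambda>x. F x - c * x) has_real_derivative y) (at x) \<and> y \<ge> 0"
        using d c by (intro exI[of _ "F' x - c"]) (auto intro!: derivative_eq_intros)
    qed
    then show ?thesis by (simp add: algebra_simps)
  qed
  show ?thesis
  proof (cases "q \<le> p")
    case True
    have "(p - q) * (c * (p - q)) \<le> (p - q) * (F p - F q)" using key[OF True] True by (intro mult_left_mono) auto
    then show ?thesis by (simp add: power2_eq_square mult_ac)
  next
    case False
    then have "p \<le> q" by simp
    have "(q - p) * (c * (q - p)) \<le> (q - p) * (F q - F p)" using key[OF \<open>p \<le> q\<close>] \<open>p \<le> q\<close> by (intro mult_left_mono) auto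
    then show ?thesis by (simp add: power2_eq_square algebra_simps)
  qed
qed

theorem theorem7:
  fixes f fx :: "real \<Rightarrow> real \<Rightarrow> real" and v :: "real \<Rightarrow> real"
    and xstar :: "real \<Rightarrow> real" and xN :: "nat \<Rightarrow> nat \<Rightarrow> real"
  assumes Cf: "continuous_on ({0..1} \<times> UNIV) (\<lambda>(t, x). f t x)"
    and Cfx: "continuous_on ({0..1} \<times> UNIV) (\<lambda>(t, x). fx t x)"
    and fx_deriv: "\<forall>t\<in>{0..1}. \<forall>x. (f t has_real_derivative fx t x) (at x)"
    and Df: "\<exists>A B. 0 < A \<and> A < 1 \<and> 0 < B \<and> (\<forall>t\<in>{0..1}. \<forall>x. \<bar>f t x\<bar> \<le> A * \<bar>x\<bar> + B)"
    and Dfx: "\<exists>c. c > -1 \<and> (\<forall>t\<in>{0..1}. \<forall>x. fx t x \<ge> c)"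
    and Dv: "continuous_on {0..1} v"
    and xstar_sol: "is_H2_solution f v xstar"
    and xstar_unique: "\<forall>z. is_H2_solution f v z \<longrightarrow> (\<forall>t\<in>{0..1}. z t = xstar t)"
    and xN_sol: "\<forall>N\<ge>2. xN N 0 = 0 \<and> xN N N = 0 \<and>
        (\<forall>k\<in>{1..N-1}. xN N (k+1) - 2 * xN N k + xN N (k-1) =
           1 / real N ^ 2 * f (real k / real N) (xN N k) + 1 / real N ^ 2 * v (real k / real N))"
  shows "(\<lambda>N. Max ((\<lambda>k. \<bar>xstar (real k / real N) - xN N k\<bar>) ` {0..N})) \<longlonglongrightarrow> 0"
proof -
  obtain y g where H10: "H1_0 xstar" and xy: "has_L2_weak_deriv xstar y" and yg: "has_L2_weak_deriv y g"
    and ae: "AE t in lebesgue_on {0..1}. g t = f t (xstar t) + v t"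
    using xstar_sol unfolding is_H2_solution_def by blast
  have xs0: "xstar 0 = 0" and xs1: "xstar 1 = 0" using H10 unfolding H1_0_def by auto
  note R = regularity[OF xy yg ae Cf Dv]
  define h where "h = (\<lambda>t. f t (xstar t) + v t)"
  have ch: "continuous_on {0..1} h" using R(3) unfolding h_def .
  have dd: "\<forall>t. 0 < t \<and> t < 1 \<longrightarrow> (xstar has_real_derivative y t) (at t) \<and> (y has_real_derivative h t) (at t)"
    using R(4) unfolding h_def .
  have uc: "uniformly_continuous_on {0..1} h" by (rule compact_uniformly_continuous[OF ch]) simp
  obtain c where c: "c > -1" "\<forall>t\<in>{0..1}. \<forall>x. fx t x \<ge> c" using Dfx by blast
  define a where "a = max 0 (- c)"
  have a: "0 \<le> a" "a < 1" "- a \<le> c" using c(1) unfolding a_def by auto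
  have monoF: "(p - q) * (f t p - f t q) \<ge> - a * (p - q)\<^sup>2" if t: "t \<in> {0..1}" for t p q
  proof -
    have "(p - q) * (f t p - f t q) \<ge> c * (p - q)\<^sup>2"
      by (rule mono_f[where F' = "fx t"]) (use fx_deriv c t in auto)
    moreover have "- a * (p - q)\<^sup>2 \<le> c * (p - q)\<^sup>2" using a by (intro mult_right_mono) auto
    ultimately show ?thesis by linarith
  qed
  show ?thesis
  proof (rule LIMSEQ_I)
    fix \<epsilon> :: real assume \<epsilon>: "0 < \<epsilon>"
    define \<eta> where "\<eta> = \<epsilon> * (1 - a) / 4"
    have \<eta>: "0 < \<eta>" unfolding \<eta>_def using \<epsilon> a by simp
    obtain \<delta> where \<delta>: "\<delta> > 0" "\<forall>u\<in>{0..1}. \<forall>w\<in>{0..1}. dist w u < \<delta> \<longrightarrow> dist (h w) (h u) < \<eta>"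
      using uc \<eta> unfolding uniformly_continuous_on_def by metis
    obtain N0 :: nat where N0: "N0 \<ge> 2" "1 / real N0 < \<delta>"
    proof -
      obtain n :: nat where n: "1 / \<delta> < real n" using reals_Archimedean2 by blast
      show ?thesis
      proof (rule that[of "n + 2"])
        show "2 \<le> n + 2" by simp
        have "0 < real n" using n \<delta> by (smt (verit) divide_pos_pos)
        have "1 / real (n + 2) < 1 / real n" using \<open>0 < real n\<close> by (simp add: frac_less2)
        also have "\<dots> < \<delta>" using n \<delta> \<open>0 < real n\<close> by (simp add: field_simps)
        finally show "1 / real (n + 2) < \<delta>" .
      qed
    qed
    show "\<exists>no. \<forall>N\<ge>no. norm (Max ((\<lambda>k. \<bar>xstar (real k / real N) - xN N k\<bar>) ` {0..N}) - 0) < \<epsilon>"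
    proof (intro exI allI impI)
      fix N assume NN0: "N0 \<le> N"
      have N2: "N \<ge> 2" using NN0 N0 by simp
      have Npos: "0 < real N" using N2 by simp
      have Nd: "1 / real N < \<delta>"
      proof -
        have "1 / real N \<le> 1 / real N0" using NN0 N0 by (simp add: frac_le)
        then show ?thesis using N0 by simp
      qed
      note XN = xN_sol[rule_format, OF N2]
      define e where "e = (\<lambda>k. xstar (real k / real N) - xN N k)"
      define D where "D = (\<lambda>k. f (real k / real N) (xstar (real k / real N)) - f (real k / real N) (xN N k))"
      define r where "r = (\<lambda>k::nat. xstar (real (k+1) / real N) - 2 * xstar (real k / real N) + xstar (real (k-1) / real N)
          - (1 / real N)\<^sup>2 * h (real k / real N))"
      have bound: "\<forall>k\<le>N. \<bar>e k\<bar> \<le> (2 * \<eta>) / (1 - a)"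
      proof (rule disc[where D = D and r = r])
        show "1 \<le> N" using N2 by simp
        show "e 0 = 0" unfolding e_def using xs0 XN by simp
        show "e N = 0" unfolding e_def using xs1 XN Npos by simp
        show "0 \<le> a" "a < 1" using a by auto
        show "0 \<le> 2 * \<eta>" using \<eta> by simp
        show "\<forall>k\<in>{1..N-1}. e (k+1) - 2 * e k + e (k-1) = D k / (real N)\<^sup>2 + r k"
        proof
          fix k assume k: "k \<in> {1..N-1}"
          have eqk: "xN N (k+1) - 2 * xN N k + xN N (k-1) =
             1 / real N ^ 2 * f (real k / real N) (xN N k) + 1 / real N ^ 2 * v (real k / real N)"
            using XN k by blast
          show "e (k+1) - 2 * e k + e (k-1) = D k / (real N)\<^sup>2 + r k"
          proof -
            have A: "D k / (real N)\<^sup>2 = 1 / real N ^ 2 * f (real k / real N) (xstar (real k / real N))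
                 - 1 / real N ^ 2 * f (real k / real N) (xN N k)"
              unfolding D_def by (simp add: diff_divide_distrib)
            have B: "(1 / real N)\<^sup>2 * h (real k / real N) = 1 / real N ^ 2 * f (real k / real N) (xstar (real k / real N))
                 + 1 / real N ^ 2 * v (real k / real N)"
              unfolding h_def by (simp add: power_one_over ring_distribs)
            show ?thesis unfolding e_def r_def using eqk A B by argo
          qed
        qed
        show "\<forall>k\<in>{1..N-1}. e k * D k \<ge> - a * (e k)\<^sup>2"
        proof
          fix k assume k: "k \<in> {1..N-1}"
          have "real k / real N \<in> {0..1}" using k Npos by (auto simp: field_simps)
          then show "e k * D k \<ge> - a * (e k)\<^sup>2" unfolding e_def D_def by (rule monoF)
        qed
        show "\<forall>k\<in>{1..N-1}. \<bar>r k\<bar> \<le> 2 * \<eta> / (real N)\<^sup>2"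
        proof
          fix k assume k: "k \<in> {1..N-1}"
          define t where "t = real k / real N"
          define d where "d = 1 / real N"
          have kN: "real k + 1 \<le> real N" "1 \<le> real k" using k N2 by auto
          have t1: "real (k+1) / real N = t + d" unfolding t_def d_def by (simp add: add_divide_distrib)
          have t2: "real (k-1) / real N = t - d" unfolding t_def d_def using kN by (simp add: of_nat_diff diff_divide_distrib)
          have tc: "0 \<le> t - d" "t + d \<le> 1" "0 < d" unfolding t_def d_def using kN Npos
            by (auto simp: field_simps)
          have md: "\<forall>u. t - d < u \<and> u < t + d \<longrightarrow> \<bar>h u - h t\<bar> \<le> \<eta>"
          proof (intro allI impI)
            fix u assume u: "t - d < u \<and> u < t + d"
            have "u \<in> {0..1}" "t \<in> {0..1}" using u tc by auto
            moreover have "dist u t < \<delta>" using u Nd unfolding d_def dist_real_def by auto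
            ultimately have "dist (h u) (h t) < \<eta>" using \<delta>(2) by blast
            then show "\<bar>h u - h t\<bar> \<le> \<eta>" unfolding dist_real_def by simp
          qed
          have "\<bar>xstar (t + d) - 2 * xstar t + xstar (t - d) - d\<^sup>2 * h t\<bar> \<le> 2 * \<eta> * d\<^sup>2"
            by (rule second_diff[OF R(1) R(2) dd tc md])
          then show "\<bar>r k\<bar> \<le> 2 * \<eta> / (real N)\<^sup>2"
            unfolding r_def using t1 t2 unfolding t_def d_def by (simp add: power_divide)
        qed
      qed
      have eq2: "2 * \<eta> / (1 - a) = \<epsilon> / 2" unfolding \<eta>_def using a by (simp add: field_simps)
      have b2: "\<forall>k\<le>N. \<bar>e k\<bar> \<le> \<epsilon> / 2" using bound unfolding eq2 .
      have "Max ((\<lambda>k. \<bar>xstar (real k / real N) - xN N k\<bar>) ` {0..N}) \<le> \<epsilon> / 2"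
        using b2 unfolding e_def by (intro Max.boundedI) auto
      moreover have "0 \<le> Max ((\<lambda>k. \<bar>xstar (real k / real N) - xN N k\<bar>) ` {0..N})"
      proof -
        have mem: "\<bar>xstar (real 0 / real N) - xN N 0\<bar> \<in> (\<lambda>k. \<bar>xstar (real k / real N) - xN N k\<bar>) ` {0..N}"
          by (rule imageI) simp
        show ?thesis by (rule order_trans[OF abs_ge_zero Max_ge[OF _ mem]]) simp
      qed
      ultimately show "norm (Max ((\<lambda>k. \<bar>xstar (real k / real N) - xN N k\<bar>) ` {0..N}) - 0) < \<epsilon>"
        using \<epsilon> unfolding real_norm_def diff_zero by arith
    qed
  qed
qed

end
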